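(* Let $T_2$ be the tree with vertex set $\{w,x,y,z,u_1,a_1,b_1\}$ and edges $wx,xy,yz,zu_1,u_1a_1,u_1b_1$ (order $n=7$, maximum degree $\Delta=3$). Then $\gamma^{\rm ID}(T_2)=5=\frac23\cdot 7+\frac13 = \left(\frac{\Delta-1}{\Delta}\right)n+\frac13$.
   Context: An identifying code of a graph $G$ is a set $C\subseteq V(G)$ such that every vertex $v$ has $N[v]\cap C\neq\emptyset$ and for all distinct $u,v$, $N[u]\cap C \ne N[v]\cap C$, where $N[v]$ is the closed neighborhood; $\gamma^{\rm ID}(G)$ is its minimum size. *)

theory Defs
  imports Complex_Main
begin

text \<open>Simple graphs given by a vertex set V and a symmetric irreflexive adjacency relation E.\<close>

definition closed_nbhd :: "'a set \<Rightarrow> ('a \<Rightarrow> 'a \<Rightarrow> bool) \<Rightarrow> 'a \<Rightarrow> 'a set" where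
  "closed_nbhd V E v = {u \<in> V. u = v \<or> E v u}"

definition is_identifying_code :: "'a set \<Rightarrow> ('a \<Rightarrow> 'a \<Rightarrow> bool) \<Rightarrow> 'a set \<Rightarrow> bool" where
  "is_identifying_code V E C \<longleftrightarrow> C \<subseteq> V
     \<and> (\<forall>v\<in>V. closed_nbhd V E v \<inter> C \<noteq> {})
     \<and> (\<forall>u\<in>V. \<forall>v\<in>V. u \<noteq> v \<longrightarrow> closed_nbhd V E u \<inter> C \<noteq> closed_nbhd V E v \<inter> C)"

definition gamma_ID :: "'a set \<Rightarrow> ('a \<Rightarrow> 'a \<Rightarrow> bool) \<Rightarrow> nat" where
  "gamma_ID V E = (LEAST k. \<exists>C. is_identifying_code V E C \<and> card C = k)"

definition degree :: "'a set \<Rightarrow> ('a \<Rightarrow> 'a \<Rightarrow> bool) \<Rightarrow> 'a \<Rightarrow> nat" where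
  "degree V E v = card {u \<in> V. E v u}"

definition max_degree :: "'a set \<Rightarrow> ('a \<Rightarrow> 'a \<Rightarrow> bool) \<Rightarrow> nat" where
  "max_degree V E = Max (degree V E ` V)"

datatype T2v = w | x | y | z | u1 | a1 | b1

definition T2_edges :: "(T2v \<times> T2v) set" where
  "T2_edges = {(w,x),(x,y),(y,z),(z,u1),(u1,a1),(u1,b1)}"

definition T2_adj :: "T2v \<Rightarrow> T2v \<Rightarrow> bool" where
  "T2_adj p q \<longleftrightarrow> (p, q) \<in> T2_edges \<or> (q, p) \<in> T2_edges"

definition T2_V :: "T2v set" where
  "T2_V = {w, x, y, z, u1, a1, b1}"

end

theory Submission
  imports Defs
begin

lemma V_univ: "T2_V = UNIV"
  unfolding T2_V_def using T2v.exhaust by blast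

lemma nb: "closed_nbhd T2_V T2_adj v =
  (case v of w \<Rightarrow> {w,x} | x \<Rightarrow> {w,x,y} | y \<Rightarrow> {x,y,z} | z \<Rightarrow> {y,z,u1}
   | u1 \<Rightarrow> {z,u1,a1,b1} | a1 \<Rightarrow> {u1,a1} | b1 \<Rightarrow> {u1,b1})"
  by (cases v) (auto simp: closed_nbhd_def V_univ T2_adj_def T2_edges_def elim: T2v.exhaust)

lemma idc: "is_identifying_code T2_V T2_adj C \<longleftrightarrow>
   (\<forall>v. closed_nbhd T2_V T2_adj v \<inter> C \<noteq> {}) \<and>
   (\<forall>u v. u \<noteq> v \<longrightarrow> closed_nbhd T2_V T2_adj u \<inter> C \<noteq> closed_nbhd T2_V T2_adj v \<inter> C)"
  unfolding is_identifying_code_def V_univ by simp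

lemma allv: "(\<forall>v. P v) \<longleftrightarrow> P w \<and> P x \<and> P y \<and> P z \<and> P u1 \<and> P a1 \<and> P b1"
  by (metis T2v.exhaust)

lemma lower: assumes "is_identifying_code T2_V T2_adj C" shows "5 \<le> card C"
proof -
  have fin: "finite C" using assms unfolding is_identifying_code_def T2_V_def
    using finite_subset by blast
  have sep: "\<And>u v. u \<noteq> v \<Longrightarrow> closed_nbhd T2_V T2_adj u \<inter> C \<noteq> closed_nbhd T2_V T2_adj v \<inter> C"
    and dom: "\<And>v. closed_nbhd T2_V T2_adj v \<inter> C \<noteq> {}"
    using assms unfolding idc by auto
  have "{w,x}\<inter>C \<noteq> {w,x,y}\<inter>C" using sep[of w x] by (simp add: nb)
  hence Y: "y \<in> C" by blast
  have "{u1,a1}\<inter>C \<noteq> {z,u1,a1,b1}\<inter>C" using sep[of a1 u1] by (simp add: nb)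
  hence 1: "z \<in> C \<or> b1 \<in> C" by blast
  have "{u1,b1}\<inter>C \<noteq> {z,u1,a1,b1}\<inter>C" using sep[of b1 u1] by (simp add: nb)
  hence 2: "z \<in> C \<or> a1 \<in> C" by blast
  have "{u1,b1}\<inter>C \<noteq> {u1,a1}\<inter>C" using sep[of b1 a1] by (simp add: nb)
  hence 3: "a1 \<in> C \<or> b1 \<in> C" by blast
  have "{w,x}\<inter>C \<noteq> {}" using dom[of w] by (simp add: nb)
  hence 4: "w \<in> C \<or> x \<in> C" by blast
  have "{u1,a1}\<inter>C \<noteq> {}" using dom[of a1] by (simp add: nb)
  hence 5: "u1 \<in> C \<or> a1 \<in> C" by blast
  have "{u1,b1}\<inter>C \<noteq> {}" using dom[of b1] by (simp add: nb)
  hence 6: "u1 \<in> C \<or> b1 \<in> C" by blast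
  have "{x,y,z}\<inter>C \<noteq> {w,x,y}\<inter>C" using sep[of y x] by (simp add: nb)
  hence 7: "w \<in> C \<or> z \<in> C" by blast
  have "{x,y,z}\<inter>C \<noteq> {y,z,u1}\<inter>C" using sep[of y z] by (simp add: nb)
  hence 8: "x \<in> C \<or> u1 \<in> C" by blast
  obtain S where "S \<subseteq> C" "card S = 5"
  proof (cases "z \<in> C")
    case True
    obtain p where p: "p \<in> {a1,b1}" "p \<in> C" using 3 by blast
    obtain q where q: "q \<in> {w,x}" "q \<in> C" using 4 by blast
    obtain r where r: "r \<in> {u1,a1,b1} - {p}" "r \<in> C" using 5 6 p by blast
    show ?thesis
      apply (rule that[of "{y,z,p,q,r}"])
      using True Y p q r by auto
  next
    case False
    obtain q where q: "q \<in> {x,u1}" "q \<in> C" using 8 by blast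
    show ?thesis
      apply (rule that[of "{y,a1,b1,w,q}"])
      using False Y 1 2 7 q by auto
  qed
  thus ?thesis using card_mono[OF fin] by metis
qed

lemma code5: "is_identifying_code T2_V T2_adj {x,y,z,u1,a1}"
  unfolding idc allv
  apply (simp add: nb)
  apply (intro conjI)
  apply (simp_all add: insert_commute)
  apply (auto simp: set_eq_iff)
  done

lemma g: "gamma_ID T2_V T2_adj = 5"
  unfolding gamma_ID_def
proof (rule Least_equality)
  show "\<exists>C. is_identifying_code T2_V T2_adj C \<and> card C = 5"
    using code5 by (intro exI[of _ "{x,y,z,u1,a1}"]) simp
next
  fix k assume "\<exists>C. is_identifying_code T2_V T2_adj C \<and> card C = k"
  thus "5 \<le> k" using lower by blast
qed

lemma c7: "card T2_V = 7" by (simp add: T2_V_def)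

lemma deg: "degree T2_V T2_adj v = (case v of w \<Rightarrow> 1 | x \<Rightarrow> 2 | y \<Rightarrow> 2 | z \<Rightarrow> 2
   | u1 \<Rightarrow> 3 | a1 \<Rightarrow> 1 | b1 \<Rightarrow> 1)"
proof -
  have "{u \<in> T2_V. T2_adj v u} = closed_nbhd T2_V T2_adj v - {v}"
    by (auto simp: closed_nbhd_def T2_adj_def T2_edges_def)
  thus ?thesis unfolding degree_def nb by (cases v) auto
qed

lemma md: "max_degree T2_V T2_adj = 3"
proof -
  have "degree T2_V T2_adj ` T2_V = {1,2,3}"
  proof -
    have "degree T2_V T2_adj ` T2_V = degree T2_V T2_adj ` {w, x, y, z, u1, a1, b1}"
      by (simp only: T2_V_def)
    also have "\<dots> = {1,2,3}" by (auto simp: deg)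
    finally show ?thesis .
  qed
  thus ?thesis unfolding max_degree_def by simp
qed

theorem mainTheorem6:
  shows "card T2_V = 7 \<and> max_degree T2_V T2_adj = 3
    \<and> gamma_ID T2_V T2_adj = 5
    \<and> real (gamma_ID T2_V T2_adj) = 2/3 * 7 + 1/3
    \<and> real (gamma_ID T2_V T2_adj)
        = ((real (max_degree T2_V T2_adj) - 1) / real (max_degree T2_V T2_adj)) * real (card T2_V) + 1/3"
  by (simp add: c7 md g)

end
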